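(* Write $Q:=3^\ell$ with $\ell\ge 5$. Let $n_1,n_2,n_5,n_9$ be nonnegative integers for which $n_1+2n_2+5n_5+9n_9=Q-1$ and the union of the base-$3$ expansions of the $n_j$'s consists of one copy of each $3^i$ with $0\le i\le \ell-2$ and $i\ne 2$, along with either one copy of $2\cdot 9$ or two copies of $9$. Then the base-$3$ expansion of $n_5$ contains $Q/9$, and if $\ell\ge 6$ then the base-$3$ expansion of $n_9$ contains $Q/27$.
   Context: A term of the base-$p$ expansion of a nonnegative integer $m=\sum_j b_jp^j$ (with $0\le b_j\le p-1$) is some $b_jp^j$ with $b_j>0$. The union of the base-$p$ expansions of several integers means the multiset of all terms of all these integers. *)

theory Defs
  imports Main "HOL-Library.Multiset"
begin

definition digit :: "nat \<Rightarrow> nat \<Rightarrow> nat \<Rightarrow> nat" where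
  "digit p m j = m div p ^ j mod p"

text \<open>The multiset of terms b_j p^j (b_j > 0) of the base-p expansion of m.
  Positions j \<le> m suffice since p^j > m for j > m when p \<ge> 2.\<close>
definition base_terms :: "nat \<Rightarrow> nat \<Rightarrow> nat multiset" where
  "base_terms p m =
     image_mset (\<lambda>j. digit p m j * p ^ j)
       (filter_mset (\<lambda>j. digit p m j > 0) (mset_set {..m}))"

end

theory Submission
  imports Defs
begin

lemma digit_lt3: "digit 3 m i < 3" by (simp add: digit_def)

lemma pow3_ge3: "j < i \<Longrightarrow> (3::nat) \<le> 3 ^ (i - j)"
proof -
  assume "j < i"
  then have "(3::nat) ^ 1 \<le> 3 ^ (i - j)" by (intro power_increasing) auto
  then show ?thesis by simp
qed

lemma pow3_uniq:
  fixes a b i j :: nat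
  assumes "a \<in> {1,2}" "b \<in> {1,2}" "a * 3 ^ j = b * 3 ^ i"
  shows "j = i \<and> a = b"
proof -
  have "\<not> j < i"
  proof
    assume "j < i"
    then have "(3::nat) ^ i = 3 ^ j * 3 ^ (i - j)" by (simp flip: power_add)
    with assms(3) have "a = b * 3 ^ (i - j)" by simp
    moreover have "3 ^ (i - j) \<ge> (3::nat)" using \<open>j < i\<close> by (rule pow3_ge3)
    ultimately show False using assms(1,2) by auto
  qed
  moreover have "\<not> i < j"
  proof
    assume "i < j"
    then have "(3::nat) ^ j = 3 ^ i * 3 ^ (j - i)" by (simp flip: power_add)
    with assms(3) have "b = a * 3 ^ (j - i)" by simp
    moreover have "3 ^ (j - i) \<ge> (3::nat)" using \<open>i < j\<close> by (rule pow3_ge3)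
    ultimately show False using assms(1,2) by auto
  qed
  ultimately have "i = j" by simp
  with assms(3) show ?thesis by simp
qed


lemma pos_le: "digit 3 m i > 0 \<Longrightarrow> i \<le> m"
proof -
  assume "digit 3 m i > 0"
  then have "m div 3 ^ i > 0" by (auto simp: digit_def)
  then have "3 ^ i \<le> m" by (simp add: div_greater_zero_iff)
  moreover have "i < (3::nat) ^ i" by (induction i) auto
  ultimately show ?thesis by simp
qed

lemma count_bt:
  assumes "d \<in> {1,2}"
  shows "count (base_terms 3 m) (d * 3 ^ i) = (if digit 3 m i = d then 1 else 0)"
proof -
  define A where "A = filter_mset (\<lambda>j. digit 3 m j > 0) (mset_set {..m})"
  define f where "f = (\<lambda>j. digit 3 m j * (3::nat) ^ j)"
  have cA: "count A j = (if j \<le> m \<and> digit 3 m j > 0 then 1 else 0)" for j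
    unfolding A_def by simp
  have sA: "j \<in> set_mset A \<longleftrightarrow> j \<le> m \<and> digit 3 m j > 0" for j
    unfolding A_def by simp
  have 1: "j = i \<and> digit 3 m j = d" if "digit 3 m j > 0" "digit 3 m j * 3 ^ j = d * 3 ^ i" for j
  proof -
    have "digit 3 m j \<in> {1,2}" using digit_lt3[of m j] that(1) by auto
    from pow3_uniq[OF this assms that(2)] show ?thesis by blast
  qed
  have d0: "d > 0" using assms by auto
  have S: "f -` {d * 3 ^ i} \<inter> set_mset A = (if digit 3 m i = d then {i} else {})"
  proof (cases "digit 3 m i = d")
    case True
    then have "i \<le> m" using pos_le[of m i] d0 by simp
    then have "i \<in> f -` {d * 3 ^ i} \<inter> set_mset A" using True d0 sA unfolding f_def by simp
    moreover have "j = i" if "j \<in> f -` {d * 3 ^ i} \<inter> set_mset A" for j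
      using that 1[of j] sA[of j] unfolding f_def by simp
    ultimately have "f -` {d * 3 ^ i} \<inter> set_mset A = {i}" by blast
    then show ?thesis using True by simp
  next
    case False
    have "j \<notin> f -` {d * 3 ^ i} \<inter> set_mset A" for j
    proof
      assume "j \<in> f -` {d * 3 ^ i} \<inter> set_mset A"
      then have "digit 3 m j > 0" "digit 3 m j * 3 ^ j = d * 3 ^ i"
        using sA[of j] unfolding f_def by simp_all
      from 1[OF this] False show False by blast
    qed
    then have "f -` {d * 3 ^ i} \<inter> set_mset A = {}" by blast
    then show ?thesis using False by simp
  qed
  have "count (base_terms 3 m) (d * 3 ^ i) = (\<Sum>y\<in>f -` {d * 3 ^ i} \<inter> set_mset A. count A y)"
    unfolding base_terms_def A_def f_def by (rule count_image_mset)
  also have "\<dots> = (if digit 3 m i = d then 1 else 0)"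
  proof (cases "digit 3 m i = d")
    case True
    then have "i \<le> m" using pos_le[of m i] d0 by simp
    then show ?thesis unfolding S using True d0 cA[of i] by simp
  next
    case False
    then show ?thesis unfolding S by simp
  qed
  finally show ?thesis .
qed

lemma count_rhs:
  assumes "finite S"
  shows "count (image_mset (\<lambda>i. (3::nat) ^ i) (mset_set S)) (3 ^ k) = (if k \<in> S then 1 else 0)"
    and "count (image_mset (\<lambda>i. (3::nat) ^ i) (mset_set S)) (2 * 3 ^ k) = 0"
proof -
  have inj: "inj_on (\<lambda>i. (3::nat) ^ i) S" by (simp add: inj_on_def)
  have e: "(3::nat) ^ k \<in> (\<lambda>i. 3 ^ i) ` S \<longleftrightarrow> k \<in> S" by auto
  show "count (image_mset (\<lambda>i. (3::nat) ^ i) (mset_set S)) (3 ^ k) = (if k \<in> S then 1 else 0)"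
    using assms e by (simp add: image_mset_mset_set[OF inj] count_mset_set' del: image_iff)
  have "2 * 3 ^ k \<noteq> (3::nat) ^ j" for j using pow3_uniq[of 2 1 k j] by auto
  then have "2 * 3 ^ k \<notin> (\<lambda>i. (3::nat) ^ i) ` S" by auto
  then show "count (image_mset (\<lambda>i. (3::nat) ^ i) (mset_set S)) (2 * 3 ^ k) = 0"
    using assms by (simp add: image_mset_mset_set[OF inj] count_mset_set' del: image_iff)
qed

lemma digits_sum: "(n::nat) mod 3 ^ k = (\<Sum>i<k. digit 3 n i * 3 ^ i)"
proof (induction k)
  case 0 then show ?case by simp
next
  case (Suc k)
  have "n mod 3 ^ Suc k = 3 ^ k * (n div 3 ^ k mod 3) + n mod 3 ^ k"
    unfolding power_Suc2 by (rule mod_mult2_eq)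
  then show ?case using Suc by (simp add: digit_def)
qed

lemma combo:
  fixes a b c d :: nat
  assumes "a < 3" "b < 3" "c < 3" "d < 3"
  defines "c1 \<equiv> (if a = 1 then 1 else 0) + (if b = 1 then 1 else 0) + (if c = 1 then 1 else 0) + (if d = 1 then (1::nat) else 0)"
  defines "c2 \<equiv> (if a = 2 then 1 else 0) + (if b = 2 then 1 else 0) + (if c = 2 then 1 else 0) + (if d = 2 then (1::nat) else 0)"
  defines "w \<equiv> a + 2*b + 5*c + 9*d"
  shows "(c1 = 1 \<and> c2 = 0 \<longrightarrow> w \<in> {1,2,5,9} \<and> (w = 5 \<longrightarrow> c = 1) \<and> (w = 9 \<longrightarrow> d = 1))
    \<and> (c1 = 0 \<and> c2 = 0 \<longrightarrow> w = 0)
    \<and> ((c1 = 0 \<and> c2 = 1) \<or> (c1 = 2 \<and> c2 = 0) \<longrightarrow> w \<in> {2,4,10,18,3,6,7,11,14})"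
proof -
  have h: "x < 3 \<Longrightarrow> x = 0 \<or> x = 1 \<or> x = 2" for x :: nat by auto
  show ?thesis unfolding c1_def c2_def w_def
    using h[OF assms(1)] h[OF assms(2)] h[OF assms(3)] h[OF assms(4)]
    apply (elim disjE)
    apply (simp_all only: )
    apply simp_all
    done
qed

lemma enum3:
  fixes w0 w1 w2 :: nat
  assumes "w0 \<in> {1,2,5,9}" "w1 \<in> {1,2,5,9}" "w2 \<in> {2,4,10,18,3,6,7,11,14}"
    "(w0 + 3*w1 + 9*w2) mod 27 = 26"
  shows "w0 + 3*w1 + 9*w2 < 162"
  using assms
  apply (simp only: insert_iff empty_iff simp_thms)
  apply (elim disjE)
  apply simp_all
  done


lemma pow_split: "3 \<le> k \<Longrightarrow> (3::nat) ^ k = 27 * 3 ^ (k - 3)"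
proof -
  assume "3 \<le> k"
  then have "(3::nat) ^ k = 3 ^ (3 + (k - 3))" by simp
  also have "\<dots> = 3 ^ 3 * 3 ^ (k - 3)" by (rule power_add)
  finally show ?thesis by simp
qed

lemma top_case:
  fixes r w x c :: nat
  assumes "r < 6 * x" "w \<in> {1,2,5,9}" "r + w * x = c * x - 1" "x \<ge> 1"
  shows "c = 9 \<Longrightarrow> w = 5" and "c = 12 \<Longrightarrow> w = 9"
proof -
  have "w = 1 \<or> w = 2 \<or> w = 5 \<or> w = 9" using assms(2) by simp
  then show "c = 9 \<Longrightarrow> w = 5" using assms(1,3,4)
    apply (elim disjE) apply simp_all done
  from \<open>w = 1 \<or> w = 2 \<or> w = 5 \<or> w = 9\<close> show "c = 12 \<Longrightarrow> w = 9" using assms(1,3,4)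
    apply (elim disjE) apply simp_all done
qed

theorem lemma4p2:
  fixes l n1 n2 n5 n9 :: nat
  assumes "l \<ge> 5"
    and "n1 + 2 * n2 + 5 * n5 + 9 * n9 = 3 ^ l - 1"
    and "base_terms 3 n1 + base_terms 3 n2 + base_terms 3 n5 + base_terms 3 n9
           = image_mset (\<lambda>i. 3 ^ i) (mset_set {i. i \<le> l - 2 \<and> i \<noteq> 2}) + {#2 * 9#}
       \<or> base_terms 3 n1 + base_terms 3 n2 + base_terms 3 n5 + base_terms 3 n9
           = image_mset (\<lambda>i. 3 ^ i) (mset_set {i. i \<le> l - 2 \<and> i \<noteq> 2}) + {#9, 9#}"
  shows "3 ^ l div 9 \<in># base_terms 3 n5
         \<and> (l \<ge> 6 \<longrightarrow> 3 ^ l div 27 \<in># base_terms 3 n9)"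
proof -
  define m where "m = l - 2"
  have lm: "l = Suc (Suc m)" and m3: "m \<ge> 3" using assms(1) unfolding m_def by auto
  define S where "S = {i. i \<le> l - 2 \<and> i \<noteq> 2}"
  have finS: "finite S" unfolding S_def by auto
  define L where "L = base_terms 3 n1 + base_terms 3 n2 + base_terms 3 n5 + base_terms 3 n9"
  define W where "W i = digit 3 n1 i + 2 * digit 3 n2 i + 5 * digit 3 n5 i + 9 * digit 3 n9 i" for i
  define c1 where "c1 i = (if digit 3 n1 i = 1 then 1 else 0) + (if digit 3 n2 i = 1 then 1 else 0)
     + (if digit 3 n5 i = 1 then 1 else 0) + (if digit 3 n9 i = 1 then (1::nat) else 0)" for i
  define c2 where "c2 i = (if digit 3 n1 i = 2 then 1 else 0) + (if digit 3 n2 i = 2 then 1 else 0)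
     + (if digit 3 n5 i = 2 then 1 else 0) + (if digit 3 n9 i = 2 then (1::nat) else 0)" for i
  have cb1: "count (base_terms 3 n) (3 ^ i) = (if digit 3 n i = 1 then 1 else 0)" for n i
    using count_bt[of 1 n i] by simp
  have cb2: "count (base_terms 3 n) (2 * 3 ^ i) = (if digit 3 n i = 2 then 1 else 0)" for n i
    using count_bt[of 2 n i] by simp
  have cL1: "count L (3 ^ i) = c1 i" for i unfolding L_def c1_def by (simp add: cb1)
  have cL2: "count L (2 * 3 ^ i) = c2 i" for i unfolding L_def c2_def by (simp only: count_union cb2)
  have ne18: "(3::nat) ^ i \<noteq> 18" for i using pow3_uniq[of 1 2 i 2] by auto
  have e9: "(3::nat) ^ i = 9 \<longleftrightarrow> i = 2" for i
  proof
    assume "(3::nat) ^ i = 9"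
    then show "i = 2" using pow3_uniq[of 1 1 i 2] by auto
  qed simp
  have r1: "count (image_mset (\<lambda>i. (3::nat) ^ i) (mset_set S)) (3 ^ i) = (if i \<in> S then 1 else 0)" for i
    by (rule count_rhs(1)[OF finS])
  have r2: "count (image_mset (\<lambda>i. (3::nat) ^ i) (mset_set S)) (2 * 3 ^ i) = 0" for i
    by (rule count_rhs(2)[OF finS])
  have e9': "9 = (3::nat) ^ i \<longleftrightarrow> i = 2" for i using e9[of i] by linarith
  have ne18': "18 \<noteq> (3::nat) ^ i" for i using ne18[of i] by linarith
  have ne9: "(9::nat) \<noteq> 2 * 3 ^ i" for i using pow3_uniq[of 2 1 i 2] by auto
  have cnt: "(c1 i = (if i \<in> S then 1 else 0) \<and> c2 i = (if i = 2 then 1 else 0))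
     \<or> (c1 i = (if i \<in> S then 1 else 0) + (if i = 2 then 2 else 0) \<and> c2 i = 0)" for i
  proof (cases "L = image_mset (\<lambda>i. (3::nat) ^ i) (mset_set S) + {#2 * 9#}")
    case True
    have "c1 i = (if i \<in> S then 1 else 0) + (if 2 * 9 = (3::nat) ^ i then 1 else 0)"
      using cL1[of i] unfolding True count_union r1 count_single by simp
    then have "c1 i = (if i \<in> S then 1 else 0)" using ne18' by simp
    moreover have "c2 i = 0 + (if 2 * 9 = 2 * (3::nat) ^ i then 1 else 0)"
      using cL2[of i] unfolding True count_union r2 count_single by simp
    then have "c2 i = (if i = 2 then 1 else 0)" using e9' by simp
    ultimately show ?thesis by blast
  next
    case False
    then have F: "L = image_mset (\<lambda>i. (3::nat) ^ i) (mset_set S) + ({#9#} + {#9#})"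
      using assms(3) unfolding L_def S_def by simp
    have "c1 i = (if i \<in> S then 1 else 0) + ((if 9 = (3::nat) ^ i then 1 else 0) + (if 9 = (3::nat) ^ i then 1 else 0))"
      using cL1[of i] unfolding F count_union r1 count_single by simp
    then have "c1 i = (if i \<in> S then 1 else 0) + (if i = 2 then 2 else 0)" using e9' by simp
    moreover have "c2 i = 0 + ((if 9 = 2 * (3::nat) ^ i then 1 else 0) + (if 9 = 2 * (3::nat) ^ i then 1 else 0))"
      using cL2[of i] unfolding F count_union r2 count_single by simp
    then have "c2 i = 0" using ne9 by simp
    ultimately show ?thesis by blast
  qed
  have cmb: "(c1 i = 1 \<and> c2 i = 0 \<longrightarrow> W i \<in> {1,2,5,9} \<and> (W i = 5 \<longrightarrow> digit 3 n5 i = 1) \<and> (W i = 9 \<longrightarrow> digit 3 n9 i = 1))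
    \<and> (c1 i = 0 \<and> c2 i = 0 \<longrightarrow> W i = 0)
    \<and> ((c1 i = 0 \<and> c2 i = 1) \<or> (c1 i = 2 \<and> c2 i = 0) \<longrightarrow> W i \<in> {2,4,10,18,3,6,7,11,14})" for i
    unfolding c1_def c2_def W_def by (rule combo) (simp_all add: digit_lt3)
  have P1: "W i \<in> {1,2,5,9} \<and> (W i = 5 \<longrightarrow> digit 3 n5 i = 1) \<and> (W i = 9 \<longrightarrow> digit 3 n9 i = 1)"
    if "i \<le> m" "i \<noteq> 2" for i
  proof -
    have "i \<in> S" using that unfolding S_def m_def by simp
    then have "c1 i = 1 \<and> c2 i = 0" using cnt[of i] that(2) by auto
    then show ?thesis using cmb[of i] by blast
  qed
  have P0: "W i = 0" if "i > m" for i
  proof -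
    have "i \<notin> S" "i \<noteq> 2" using that m3 unfolding S_def m_def by auto
    then have "c1 i = 0 \<and> c2 i = 0" using cnt[of i] by auto
    then show ?thesis using cmb[of i] by blast
  qed
  have P2: "W 2 \<in> {2,4,10,18,3,6,7,11,14}"
  proof -
    have "2 \<notin> S" unfolding S_def by simp
    then have "(c1 2 = 0 \<and> c2 2 = 1) \<or> (c1 2 = 2 \<and> c2 2 = 0)" using cnt[of 2] by auto
    then show ?thesis using cmb[of 2] by blast
  qed
  define R where "R k = (\<Sum>i<k. W i * 3 ^ i)" for k
  have RS: "R (Suc k) = R k + W k * 3 ^ k" for k unfolding R_def by simp
  have lt: "n < 3 ^ l" if "n \<le> 3 ^ l - 1" for n :: nat
  proof -
    have "(0::nat) < 3 ^ l" by simp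
    then show ?thesis using that by linarith
  qed
  have dsum: "n = (\<Sum>i<l. digit 3 n i * 3 ^ i)" if "n \<le> 3 ^ l - 1" for n
    using digits_sum[of n l] lt[OF that] by simp
  have "n1 + 2 * n2 + 5 * n5 + 9 * n9 = R l"
  proof -
    have h1: "n1 = (\<Sum>i<l. digit 3 n1 i * 3 ^ i)" by (rule dsum) (use assms(2) in simp)
    have h2: "n2 = (\<Sum>i<l. digit 3 n2 i * 3 ^ i)" by (rule dsum) (use assms(2) in simp)
    have h5: "n5 = (\<Sum>i<l. digit 3 n5 i * 3 ^ i)" by (rule dsum) (use assms(2) in simp)
    have h9: "n9 = (\<Sum>i<l. digit 3 n9 i * 3 ^ i)" by (rule dsum) (use assms(2) in simp)
    show ?thesis
      apply (subst h1, subst h2, subst h5, subst h9)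
      unfolding R_def W_def
      by (simp add: sum_distrib_left sum.distrib algebra_simps)
  qed
  then have Rl: "R l = 3 ^ l - 1" using assms(2) by simp
  have Rm1: "R (Suc m) = 9 * 3 ^ m - 1"
    using Rl RS[of "Suc m"] P0[of "Suc m"] unfolding lm by simp
  have modR: "R k mod 27 = R 3 mod 27" if "3 \<le> k" for k
    using that
  proof (induction k rule: dec_induct)
    case base then show ?case by simp
  next
    case (step k)
    have "(27::nat) dvd 3 ^ k"
    proof -
      have "(3::nat) ^ k = 27 * 3 ^ (k - 3)" using step(1) by (rule pow_split)
      then show ?thesis by simp
    qed
    then obtain t where t: "(3::nat) ^ k = 27 * t" by blast
    have "R (Suc k) = R k + 27 * (W k * t)" using RS[of k] t by (simp add: mult_ac)
    then have "R (Suc k) mod 27 = (R k + 27 * (W k * t)) mod 27" by simp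
    also have "\<dots> = R k mod 27" by simp
    finally show ?case using step(3) by simp
  qed
  have "(3 ^ l - 1) mod 27 = (26::nat)"
  proof -
    have "(3::nat) ^ l = 27 * 3 ^ (l - 3)" using assms(1) by (intro pow_split) simp
    moreover have "(3::nat) ^ (l - 3) \<ge> 1" by simp
    ultimately obtain q where "(3::nat) ^ l = 27 * (Suc q)"
      by (metis Suc_pred' less_le_trans zero_less_one)
    then have "(3::nat) ^ l - 1 = 26 + 27 * q" by simp
    then show ?thesis by simp
  qed
  then have R3mod: "R 3 mod 27 = 26" using modR[of l] Rl assms(1) by simp
  have R0: "R 0 = 0" unfolding R_def by simp
  have R1: "R 1 = W 0" using RS[of 0] R0 by simp
  have R2: "R 2 = W 0 + 3 * W 1"
  proof -
    have "R (Suc 1) = R 1 + W 1 * 3 ^ 1" by (rule RS)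
    also have "Suc 1 = 2" by simp
    finally show ?thesis using R1 by simp
  qed
  have R3: "R 3 = W 0 + 3 * W 1 + 9 * W 2"
  proof -
    have "R (Suc 2) = R 2 + W 2 * 3 ^ 2" by (rule RS)
    also have "Suc 2 = 3" by simp
    finally show ?thesis using R2 by simp
  qed
  have R3b: "R 3 < 162"
  proof -
    have a: "W 0 \<in> {1,2,5,9}" using P1[of 0] m3 by simp
    have b: "W 1 \<in> {1,2,5,9}" using P1[of 1] m3 by simp
    show ?thesis unfolding R3 by (rule enum3[OF a b P2]) (use R3mod R3 in simp)
  qed
  have bound: "R k < 6 * 3 ^ k" if "3 \<le> k" "k \<le> m" for k
    using that
  proof (induction k rule: dec_induct)
    case base then show ?case using R3b by simp
  next
    case (step k)
    have "W k \<le> 9" using P1[of k] step by auto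
    then have p: "W k * 3 ^ k \<le> 9 * 3 ^ k" by (rule mult_right_mono) simp
    have ih: "R k < 6 * 3 ^ k" using step by simp
    have "R (Suc k) < 15 * 3 ^ k" using RS[of k] p ih by linarith
    then show ?case by simp
  qed
  have Wm: "W m = 5"
  proof -
    have b: "R m < 6 * 3 ^ m" using bound[of m] m3 by simp
    have e: "R m + W m * 3 ^ m = 9 * 3 ^ m - 1" using Rm1 RS[of m] by simp
    have p: "(3::nat) ^ m \<ge> 1" by simp
    have "W m \<in> {1,2,5,9}" using P1[of m] m3 by auto
    from top_case(1)[OF b this e p] show ?thesis by simp
  qed
  have D5: "digit 3 n5 m = 1" using P1[of m] m3 Wm by auto
  have part1: "3 ^ l div 9 \<in># base_terms 3 n5"
  proof -
    have "(3::nat) ^ l div 9 = 3 ^ m" unfolding lm by simp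
    then show ?thesis using cb1[of n5 m] D5 by (simp add: count_greater_zero_iff[symmetric])
  qed
  have part2: "3 ^ l div 27 \<in># base_terms 3 n9" if "l \<ge> 6"
  proof -
    define k where "k = m - 1"
    have mk: "m = Suc k" and k3: "k \<ge> 3" using that unfolding k_def m_def by auto
    have b: "R k < 6 * 3 ^ k" using bound[of k] k3 mk by simp
    have e: "R k + W k * 3 ^ k = 12 * 3 ^ k - 1"
      using Rm1 RS[of m] RS[of k] Wm unfolding mk by simp
    have p: "(3::nat) ^ k \<ge> 1" by simp
    have "W k \<in> {1,2,5,9}" using P1[of k] k3 mk by auto
    from top_case(2)[OF b this e p] have "W k = 9" by simp
    then have D9: "digit 3 n9 k = 1" using P1[of k] k3 mk by auto
    have "(3::nat) ^ l div 27 = 3 ^ k" unfolding lm mk by simp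
    then show ?thesis using cb1[of n9 k] D9 by (simp add: count_greater_zero_iff[symmetric])
  qed
  show ?thesis using part1 part2 by blast
qed

end
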